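(* For every integer $n\ge 3$, $$f(n,\mathcal{B}(2K_2))=2^n-\binom{n}{2}-n-1.$$
   Context: $2K_2$ is the graph consisting of two disjoint edges. For a graph $G$, a hypergraph $H$ is a Berge-$G$ hypergraph if there are an injective map $\phi:V(G)\to V(H)$ and pairwise distinct hyperedges $e_{xy}\in E(H)$, one for each $xy\in E(G)$, with $\phi(x),\phi(y)\in e_{xy}$. $\mathcal{B}(G)$ denotes the family of all Berge-$G$ hypergraphs. For a positive integer $n$ and a graph $G$, $f(n,\mathcal{B}(G))$ is the smallest number of colors in a coloring of all subsets of $[n]=\{1,\dots,n\}$ (i.e. of $2^{[n]}$) such that there is no monochromatic Berge-$G$ hypergraph, i.e. no color class, viewed as a (non-uniform) hypergraph on $[n]$, contains a Berge-$G$ subhypergraph. *)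

theory Defs
  imports Main
begin

text \<open>A (simple) graph is given by a vertex set V and an edge set E of 2-element subsets of V.\<close>

definition contains_berge :: "'v set \<Rightarrow> 'v set set \<Rightarrow> 'a set set \<Rightarrow> bool" where
  "contains_berge V E H \<longleftrightarrow>
     (\<exists>(phi :: 'v \<Rightarrow> 'a) (e :: 'v set \<Rightarrow> 'a set).
        inj_on phi V \<and> inj_on e E \<and> e ` E \<subseteq> H \<and>
        (\<forall>x\<in>V. \<forall>y\<in>V. {x, y} \<in> E \<longrightarrow> phi x \<in> e {x, y} \<and> phi y \<in> e {x, y}))"

definition two_K2_V :: "nat set" where "two_K2_V = {0, 1, 2, 3}"
definition two_K2_E :: "nat set set" where "two_K2_E = {{0, 1}, {2, 3}}"

definition f_berge :: "nat \<Rightarrow> 'v set \<Rightarrow> 'v set set \<Rightarrow> nat" where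
  "f_berge n V E = (LEAST k. \<exists>c :: nat set \<Rightarrow> nat.
      (\<forall>A\<in>Pow {1..n}. c A < k) \<and>
      (\<forall>i<k. \<not> contains_berge V E {A \<in> Pow {1..n}. c A = i}))"

end

theory Submission
  imports Defs
begin
lemma berge_intro:
  assumes abcd: "a \<in> A" "b \<in> A" "c \<in> B" "d \<in> B" "distinct [a, b, c, d]" and AB: "A \<noteq> B" "A \<in> H" "B \<in> H"
  shows "contains_berge two_K2_V two_K2_E H"
proof -
  define phi where "phi = (\<lambda>x::nat. if x = 0 then a else if x = 1 then b else if x = 2 then c else d)"
  define e where "e = (\<lambda>S::nat set. if S = {0,1} then A else B)"
  have ne: "{0::nat,1} \<noteq> {2,3}" by (auto simp: doubleton_eq_iff)
  have 1: "inj_on phi {0,1,2,3}" using abcd(5) unfolding inj_on_def phi_def by auto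
  have 2: "inj_on e {{0,1},{2,3}}" using AB ne unfolding inj_on_def e_def by auto
  have 3: "e ` {{0,1},{2,3}} \<subseteq> H" using AB by (auto simp: e_def)
  have 4: "phi x \<in> e {x, y} \<and> phi y \<in> e {x, y}" if "{x, y} \<in> {{0::nat,1},{2,3}}" for x y
  proof (cases "{x,y} = {0,1}")
    case True
    then have "(x = 0 \<and> y = 1) \<or> (x = 1 \<and> y = 0)" by (simp add: doubleton_eq_iff)
    then have x: "x = 0 \<or> x = 1" and y: "y = 0 \<or> y = 1" by auto
    have eA: "e {x,y} = A" using True by (simp add: e_def)
    have "phi x \<in> A" using x abcd by (auto simp: phi_def)
    moreover have "phi y \<in> A" using y abcd by (auto simp: phi_def)
    ultimately show ?thesis using eA by simp
  next
    case False
    then have F: "{x,y} = {2,3}" using that by simp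
    then have "(x = 2 \<and> y = 3) \<or> (x = 3 \<and> y = 2)" by (simp add: doubleton_eq_iff)
    then have x: "x = 2 \<or> x = 3" and y: "y = 2 \<or> y = 3" by auto
    have eA: "e {x,y} = B" using False by (simp add: e_def)
    have "phi x \<in> B" using x abcd by (auto simp: phi_def)
    moreover have "phi y \<in> B" using y abcd by (auto simp: phi_def)
    ultimately show ?thesis using eA by simp
  qed
  show ?thesis
    unfolding contains_berge_def two_K2_V_def two_K2_E_def
    by (intro exI[of _ phi] exI[of _ e] conjI 1 2 3 ballI impI 4)
qed
lemma berge_elim:
  assumes "contains_berge two_K2_V two_K2_E (H::'a set set)"
  shows "\<exists>A\<in>H. \<exists>B\<in>H. A \<noteq> B \<and> (\<exists>a b c d. a \<in> A \<and> b \<in> A \<and> c \<in> B \<and> d \<in> B \<and>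
      distinct [a, b, c, d])"
proof -
  have "\<exists>phi :: nat \<Rightarrow> 'a. \<exists> e. 
    inj_on phi {0,1,2,3} \<and> inj_on e {{0,1},{2,3}} \<and>
    e ` {{0,1},{2,3}} \<subseteq> H \<and>
    (\<forall>x\<in>{0,1,2,3}. \<forall>y\<in>{0,1,2,3}. {x, y} \<in> {{0::nat,1},{2,3}} \<longrightarrow> phi x \<in> e {x, y} \<and> phi y \<in> e {x, y})"
    using assms unfolding contains_berge_def two_K2_V_def two_K2_E_def by assumption
  then obtain phi :: "nat \<Rightarrow> 'a" and e where
    ph: "inj_on phi {0,1,2,3}" and ie: "inj_on e {{0,1},{2,3}}" and
    eH: "e ` {{0,1},{2,3}} \<subseteq> H" and
    m: "\<forall>x\<in>{0,1,2,3}. \<forall>y\<in>{0,1,2,3}. {x, y} \<in> {{0::nat,1},{2,3}} \<longrightarrow> phi x \<in> e {x, y} \<and> phi y \<in> e {x, y}"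
    by (elim exE conjE)
  have 1: "e {0::nat,1} \<noteq> e {2,3}" using ie by (auto simp: inj_on_def doubleton_eq_iff)
  have 2: "distinct [phi 0, phi 1, phi 2, phi (3::nat)]" using ph by (auto simp: inj_on_def)
  have 3: "phi 0 \<in> e {0,1} \<and> phi 1 \<in> e {0::nat,1}" by (rule m[rule_format]) auto
  have 5: "phi 2 \<in> e {2,3} \<and> phi 3 \<in> e {2::nat,3}" by (rule m[rule_format]) auto
  have 4: "e {0,1} \<in> H" "e {2,3} \<in> H"
    subgoal by (rule subsetD[OF eH], rule imageI, rule insertI1)
    subgoal by (rule subsetD[OF eH], rule imageI, rule insertI2, rule insertI1)
    done
  show ?thesis
    apply (rule bexI[OF _ 4(1)], rule bexI[OF _ 4(2)])
    apply (rule conjI[OF 1])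
    apply (rule exI[of _ "phi 0"], rule exI[of _ "phi 1"], rule exI[of _ "phi 2"], rule exI[of _ "phi 3"])
    using 2 3 5 by blast
qed

lemma two_elems:
  assumes "finite A" "2 \<le> card A" shows "\<exists>a b. a \<in> A \<and> b \<in> A \<and> a \<noteq> b"
proof -
  have "A \<noteq> {}" using assms by auto
  then obtain a where a: "a \<in> A" by blast
  have "card (A - {a}) \<ge> 1" using assms a by simp
  then have "A - {a} \<noteq> {}" by (metis card.empty not_one_le_zero)
  then obtain b where "b \<in> A - {a}" by blast
  then show ?thesis using a by blast
qed

lemma big_pair_aux:
  assumes "finite A" "finite B" "3 \<le> card A" "3 \<le> card B" "y \<in> B" "y \<notin> A"
  shows "\<exists>a b c d. a \<in> A \<and> b \<in> A \<and> c \<in> B \<and> d \<in> B \<and> distinct [a, b, c, d]"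
proof -
  have "card (B - {y}) \<ge> 2" using assms by simp
  then obtain z where z: "z \<in> B" "z \<noteq> y" using two_elems[of "B - {y}"] assms by auto
  have "card (A - {z}) \<ge> card A - 1" using assms(1) by (auto simp add: card_Diff_singleton_if)
  then have "card (A - {z}) \<ge> 2" using assms by linarith
  then obtain a b where "a \<in> A - {z}" "b \<in> A - {z}" "a \<noteq> b" using two_elems[of "A - {z}"] assms by auto
  then show ?thesis using z assms by (intro exI[of _ a] exI[of _ b] exI[of _ y] exI[of _ z]) auto
qed

lemma big_pair:
  assumes "finite A" "finite B" "3 \<le> card A" "3 \<le> card B" "A \<noteq> B"
  shows "\<exists>a b c d. a \<in> A \<and> b \<in> A \<and> c \<in> B \<and> d \<in> B \<and> distinct [a, b, c, d]"
proof (cases "B \<subseteq> A")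
  case False
  then obtain y where "y \<in> B" "y \<notin> A" by auto
  then show ?thesis by (rule big_pair_aux[OF assms(1-4)])
next
  case True
  then have "\<not> A \<subseteq> B" using assms(5) by (simp add: subset_antisym)
  then obtain y where y: "y \<in> A" "y \<notin> B" by (simp add: subset_iff) blast
  from big_pair_aux[OF assms(2,1,4,3) y] obtain a b c d where
    "a \<in> B" "b \<in> B" "c \<in> A" "d \<in> A" "distinct [a, b, c, d]" by (elim exE conjE)
  then show ?thesis by (intro exI[of _ c] exI[of _ d] exI[of _ a] exI[of _ b]) auto
qed


lemma card_L:
  "card {A \<in> Pow {1..n::nat}. 3 \<le> card A} = 2 ^ n - (n choose 2) - n - 1"
proof -
  let ?S = "{1..n::nat}"
  define K where "K = (\<lambda>j. {A. A \<subseteq> ?S \<and> card A = j})"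
  have fin: "finite (Pow ?S)" by simp
  have eq: "{A \<in> Pow ?S. 3 \<le> card A} = Pow ?S - (K 0 \<union> K 1 \<union> K 2)"
    unfolding K_def by auto
  have sub: "K 0 \<union> K 1 \<union> K 2 \<subseteq> Pow ?S" unfolding K_def by auto
  have cK: "card (K j) = n choose j" for j unfolding K_def by (simp add: n_subsets)
  have finK: "finite (K j)" for j unfolding K_def by simp
  have "card (K 0 \<union> K 1 \<union> K 2) = card (K 0) + card (K 1) + card (K 2)"
    apply (subst card_Un_disjoint)
    using finK apply (auto simp: K_def)[3]
    apply (subst card_Un_disjoint)
    using finK apply (auto simp: K_def)
    done
  also have "\<dots> = 1 + n + (n choose 2)" using cK by simp
  finally have "card (K 0 \<union> K 1 \<union> K 2) = 1 + n + (n choose 2)" .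
  moreover have "card (Pow ?S) = 2 ^ n" by (simp add: card_Pow)
  ultimately show ?thesis unfolding eq using card_Diff_subset[OF _ sub] finK
    by (simp add: finite_subset[OF sub fin])
qed

lemma lower:
  assumes col: "\<forall>A\<in>Pow {1..n}. col A < k"
    and free: "\<forall>i<k. \<not> contains_berge two_K2_V two_K2_E {A \<in> Pow {1..n::nat}. col A = i}"
  shows "card {A \<in> Pow {1..n}. 3 \<le> card A} \<le> k"
proof -
  let ?L = "{A \<in> Pow {1..n}. 3 \<le> card A}"
  have "inj_on col ?L"
  proof (rule inj_onI, rule ccontr)
    fix A B assume A: "A \<in> ?L" and B: "B \<in> ?L" and eq: "col A = col B" and ne: "A \<noteq> B"
    have fA: "finite A" "finite B" using A B finite_subset by auto
    from big_pair[OF fA] A B ne obtain a b c d where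
      abcd: "a \<in> A" "b \<in> A" "c \<in> B" "d \<in> B" "distinct [a, b, c, d]" by auto
    let ?H = "{A \<in> Pow {1..n}. col A = col A}"
    have "contains_berge two_K2_V two_K2_E {X \<in> Pow {1..n}. col X = col A}"
      by (rule berge_intro[OF abcd ne]) (use A B eq in auto)
    moreover have "col A < k" using A col by auto
    ultimately show False using free by auto
  qed
  moreover have "col ` ?L \<subseteq> {..<k}" using col by auto
  ultimately have "card ?L \<le> card {..<k}" by (intro card_inj_on_le) auto
  then show ?thesis by simp
qed

lemma upper:
  assumes n: "3 \<le> n"
  shows "\<exists>col :: nat set \<Rightarrow> nat.
      (\<forall>A\<in>Pow {1..n}. col A < card {A \<in> Pow {1..n}. 3 \<le> card A}) \<and>
      (\<forall>i<card {A \<in> Pow {1..n}. 3 \<le> card A}. \<not> contains_berge two_K2_V two_K2_E {A \<in> Pow {1..n::nat}. col A = i})"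
proof -
  let ?S = "{1..n::nat}"
  let ?L = "{A \<in> Pow ?S. 3 \<le> card A}"
  have finL: "finite ?L" by simp
  obtain g where g: "bij_betw g ?L {0..<card ?L}" using ex_bij_betw_finite_nat[OF finL] by blast
  define T where "T = (\<lambda>A. insert (Min (?S - A)) A)"
  define U where "U = (\<lambda>A. if 3 \<le> card A then A else T A)"
  define col where "col = (\<lambda>A. if 2 \<le> card A then g (U A) else 0)"
  have cS: "card ?S = n" by simp
  have T2: "T A \<subseteq> ?S \<and> card (T A) = 3 \<and> A \<subseteq> T A" if "A \<subseteq> ?S" "card A = 2" for A
  proof -
    have fA: "finite A" using that finite_subset by blast
    have "?S - A \<noteq> {}"
    proof
      assume "?S - A = {}" then have "?S \<subseteq> A" by blast
      then have "card ?S \<le> card A" using fA card_mono by blast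
      then show False using that n cS by simp
    qed
    then have m: "Min (?S - A) \<in> ?S - A" by (intro Min_in) auto
    then show ?thesis using that fA unfolding T_def by auto
  qed
  have UL: "U A \<in> ?L \<and> A \<subseteq> U A" if "A \<subseteq> ?S" "2 \<le> card A" for A
  proof (cases "3 \<le> card A")
    case True then show ?thesis using that by (simp add: U_def)
  next
    case False
    then have "card A = 2" using that by simp
    then show ?thesis using T2[OF that(1)] False by (simp add: U_def)
  qed
  have U3: "card (U A) = 3" if "A \<subseteq> ?S" "card A = 2" for A
    using T2[OF that] that by (simp add: U_def)
  have L0: "0 < card ?L"
  proof -
    have "{1,2,3} \<in> ?L" using n by auto
    then show ?thesis using finL card_gt_0_iff by blast
  qed
  have col_lt: "\<forall>A\<in>Pow ?S. col A < card ?L"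
  proof
    fix A assume A: "A \<in> Pow ?S"
    show "col A < card ?L"
    proof (cases "2 \<le> card A")
      case True
      then have "U A \<in> ?L" using UL A by auto
      then have "g (U A) \<in> {0..<card ?L}" using g bij_betwE by blast
      then show ?thesis using True by (simp add: col_def)
    qed (use L0 in \<open>simp add: col_def\<close>)
  qed
  have free: "\<not> contains_berge two_K2_V two_K2_E {A \<in> Pow ?S. col A = i}" for i
  proof
    assume "contains_berge two_K2_V two_K2_E {A \<in> Pow ?S. col A = i}"
    from berge_elim[OF this] obtain A B a b c d where
      AB: "A \<in> {A \<in> Pow ?S. col A = i}" "B \<in> {A \<in> Pow ?S. col A = i}" "A \<noteq> B" and
      abcd: "a \<in> A" "b \<in> A" "c \<in> B" "d \<in> B" "distinct [a, b, c, d]" by blast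
    have AS: "A \<subseteq> ?S" "B \<subseteq> ?S" using AB by auto
    have fA: "finite A" "finite B" using AS finite_subset by blast+
    have "card {a,b} \<le> card A" using abcd fA by (intro card_mono) auto
    then have cA: "2 \<le> card A" using abcd by simp
    have "card {c,d} \<le> card B" using abcd fA by (intro card_mono) auto
    then have cB: "2 \<le> card B" using abcd by simp
    have "g (U A) = g (U B)" using AB cA cB by (simp add: col_def)
    moreover have "U A \<in> ?L" "U B \<in> ?L" using UL AS cA cB by auto
    ultimately have W: "U A = U B" using g by (auto simp: bij_betw_def inj_on_def)
    have sub: "set [a,b,c,d] \<subseteq> U A" using W UL[OF AS(1) cA] UL[OF AS(2) cB] abcd by auto
    have c4: "card (set [a,b,c,d]) = 4" using distinct_card[OF abcd(5)] by simp
    show False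
    proof (cases "3 \<le> card A \<and> 3 \<le> card B")
      case True
      then show False using W AB(3) by (simp add: U_def)
    next
      case False
      then have "card (U A) = 3" using U3 AS cA cB W by (metis le_antisym not_less_eq_eq numeral_2_eq_2 numeral_3_eq_3)
      moreover have "card (set [a,b,c,d]) \<le> card (U A)" using sub UL[OF AS(1) cA] finite_subset
        by (intro card_mono) auto
      ultimately show False using c4 by simp
    qed
  qed
  show ?thesis using col_lt free by blast
qed

theorem theorem3:
  fixes n :: nat
  assumes "n \<ge> 3"
  shows "f_berge n two_K2_V two_K2_E = 2 ^ n - (n choose 2) - n - 1"
proof -
  let ?L = "{A \<in> Pow {1..n}. 3 \<le> card A}"
  have "f_berge n two_K2_V two_K2_E = card ?L"
    unfolding f_berge_def
  proof (rule Least_equality)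
    show "\<exists>c :: nat set \<Rightarrow> nat. (\<forall>A\<in>Pow {1..n}. c A < card ?L) \<and>
      (\<forall>i<card ?L. \<not> contains_berge two_K2_V two_K2_E {A \<in> Pow {1..n}. c A = i})"
      using upper[OF assms] by blast
  next
    fix k assume "\<exists>c :: nat set \<Rightarrow> nat. (\<forall>A\<in>Pow {1..n}. c A < k) \<and>
      (\<forall>i<k. \<not> contains_berge two_K2_V two_K2_E {A \<in> Pow {1..n}. c A = i})"
    then show "card ?L \<le> k" using lower by blast
  qed
  then show ?thesis using card_L by simp
qed

end
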